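(* Let $\Omega$ be a non-empty bounded open subset of $\mathbf{R}^2$ and let $\beta:\Omega\to\mathbf{R}$ be a $C^1$ function. Assume there exists a $C^1$ function $\alpha:\Omega\to\mathbf{R}$ such that $\alpha_x\beta_y-\alpha_y\beta_x$ vanishes at no point of $\Omega$. Then for any $u\in C^1(\Omega)\cap C^0(\overline{\Omega})$ satisfying $\beta_yu_x-\beta_xu_y=0$ in $\Omega$, one has $\sup_\Omega u=\sup_{\partial\Omega}u$ and $\inf_\Omega u=\inf_{\partial\Omega}u$. *)

theory Defs
  imports "HOL-Analysis.Analysis"
begin

definition C1_on :: "(real \<times> real) set \<Rightarrow> (real \<times> real \<Rightarrow> real) \<Rightarrow> bool" where
  "C1_on S f \<longleftrightarrow> (\<exists>f'. (\<forall>p\<in>S. (f has_derivative blinfun_apply (f' p)) (at p))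
                        \<and> continuous_on S f')"

definition dx :: "(real \<times> real \<Rightarrow> real) \<Rightarrow> real \<times> real \<Rightarrow> real" where
  "dx f p = frechet_derivative f (at p) (1, 0)"

definition dy :: "(real \<times> real \<Rightarrow> real) \<Rightarrow> real \<times> real \<Rightarrow> real" where
  "dy f p = frechet_derivative f (at p) (0, 1)"

end

theory Submission imports Defs begin

lemma lin2: "blinfun_apply (L :: (real \<times> real) \<Rightarrow>\<^sub>L real) v = fst v * L (1,0) + snd v * L (0,1)"
proof -
  have "v = fst v *\<^sub>R (1,0) + snd v *\<^sub>R (0,1)" by (cases v) auto
  then have "L v = L (fst v *\<^sub>R (1,0) + snd v *\<^sub>R (0,1))" by (rule arg_cong)
  also have "\<dots> = fst v * L (1,0) + snd v * L (0,1)"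
    unfolding blinfun.add_right blinfun.scaleR_right by simp
  finally show ?thesis .
qed

definition E1 :: "real \<Rightarrow>\<^sub>L (real \<times> real)" where "E1 = Blinfun (\<lambda>x. (x, 0))"
definition E2 :: "real \<Rightarrow>\<^sub>L (real \<times> real)" where "E2 = Blinfun (\<lambda>x. (0, x))"

lemma E1_apply[simp]: "blinfun_apply E1 x = (x, 0)"
  unfolding E1_def by (subst bounded_linear_Blinfun_apply) (auto intro!: bounded_linear_Pair bounded_linear_ident bounded_linear_zero)
lemma E2_apply[simp]: "blinfun_apply E2 x = (0, x)"
  unfolding E2_def by (subst bounded_linear_Blinfun_apply) (auto intro!: bounded_linear_Pair bounded_linear_ident bounded_linear_zero)

definition INV :: "real \<Rightarrow> real \<Rightarrow> real \<Rightarrow> real \<Rightarrow> (real \<times> real) \<Rightarrow>\<^sub>L (real \<times> real)" where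
  "INV a1 a2 b1 b2 = Blinfun (\<lambda>v. ((b2 * fst v - a2 * snd v) / (a1*b2 - a2*b1), (a1 * snd v - b1 * fst v) / (a1*b2 - a2*b1)))"

lemma INV_apply: "blinfun_apply (INV a1 a2 b1 b2) v = ((b2 * fst v - a2 * snd v) / (a1*b2 - a2*b1), (a1 * snd v - b1 * fst v) / (a1*b2 - a2*b1))"
  unfolding INV_def
  apply (subst bounded_linear_Blinfun_apply)
  apply (rule linear_conv_bounded_linear[THEN iffD1])
  apply (rule linearI) apply (auto simp: algebra_simps add_divide_distrib diff_divide_distrib)
  done

lemma local_step:
  fixes \<Omega> :: "(real \<times> real) set" and \<alpha> \<beta> u :: "real \<times> real \<Rightarrow> real"
    and A B :: "real \<times> real \<Rightarrow> (real \<times> real) \<Rightarrow>\<^sub>L real"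
  assumes "open \<Omega>"
    and dA: "\<forall>p\<in>\<Omega>. (\<alpha> has_derivative blinfun_apply (A p)) (at p)" and cA: "continuous_on \<Omega> A"
    and dB: "\<forall>p\<in>\<Omega>. (\<beta> has_derivative blinfun_apply (B p)) (at p)" and cB: "continuous_on \<Omega> B"
    and jac: "\<forall>p\<in>\<Omega>. A p (1,0) * B p (0,1) - A p (0,1) * B p (1,0) \<noteq> 0"
    and H: "\<forall>p\<in>\<Omega>. \<exists>D. (u has_derivative D) (at p) \<and> (\<forall>v. B p v = 0 \<longrightarrow> D v = 0)"
    and q: "q \<in> \<Omega>"
  shows "\<exists>p\<in>\<Omega>. \<alpha> p > \<alpha> q \<and> u p = u q"
proof -
  define \<Phi> where "\<Phi> = (\<lambda>p. (\<alpha> p, \<beta> p))"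
  define \<Phi>' where "\<Phi>' = (\<lambda>p. (E1 o\<^sub>L A p) + (E2 o\<^sub>L B p))"
  have \<Phi>'_apply: "blinfun_apply (\<Phi>' p) v = (A p v, B p v)" for p v
    by (simp add: \<Phi>'_def plus_blinfun.rep_eq)
  have d\<Phi>: "(\<Phi> has_derivative blinfun_apply (\<Phi>' p)) (at p)" if "p \<in> \<Omega>" for p
  proof -
    have "(\<Phi> has_derivative (\<lambda>v. (A p v, B p v))) (at p)"
      unfolding \<Phi>_def using dA dB that by (auto intro!: has_derivative_Pair)
    moreover have "blinfun_apply (\<Phi>' p) = (\<lambda>v. (A p v, B p v))" using \<Phi>'_apply by (intro ext) simp
    ultimately show ?thesis by simp
  qed
  have c\<Phi>: "continuous_on \<Omega> \<Phi>'"
    unfolding \<Phi>'_def by (intro continuous_intros cA cB)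
  define a1 where "a1 = A q (1,0)"
  define a2 where "a2 = A q (0,1)"
  define b1 where "b1 = B q (1,0)"
  define b2 where "b2 = B q (0,1)"
  have d: "a1 * b2 - a2 * b1 \<noteq> 0" using jac q unfolding a1_def a2_def b1_def b2_def by auto
  have Aq: "A q v = fst v * a1 + snd v * a2" for v unfolding a1_def a2_def by (rule lin2)
  have Bq: "B q v = fst v * b1 + snd v * b2" for v unfolding b1_def b2_def by (rule lin2)
  have inv: "INV a1 a2 b1 b2 o\<^sub>L \<Phi>' q = id_blinfun"
  proof (rule blinfun_eqI)
    fix v :: "real \<times> real"
    show "blinfun_apply (INV a1 a2 b1 b2 o\<^sub>L \<Phi>' q) v = blinfun_apply id_blinfun v"
      using d by (simp add: INV_apply \<Phi>'_apply Aq Bq prod_eq_iff field_simps)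
  qed
  obtain U' V g g' where "open U'" "U' \<subseteq> \<Omega>" "q \<in> U'" "open V" "\<Phi> q \<in> V" and hom: "homeomorphism U' V \<Phi> g"
    and derg: "\<And>y. y \<in> V \<Longrightarrow> (g has_derivative (g' y)) (at y)"
    and g': "\<And>y. y \<in> V \<Longrightarrow> g' y = inv (blinfun_apply (\<Phi>'(g y)))"
    and bij: "\<And>y. y \<in> V \<Longrightarrow> bij (blinfun_apply (\<Phi>'(g y)))"
    by (rule inverse_function_theorem[OF \<open>open \<Omega>\<close> d\<Phi> c\<Phi> q inv]) blast+
  obtain e where "e > 0" and eV: "ball (\<Phi> q) e \<subseteq> V"
    using \<open>open V\<close> \<open>\<Phi> q \<in> V\<close> open_contains_ball by blast
  define y where "y t = \<Phi> q + (t, 0)" for t :: real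
  have yV: "y t \<in> V" if "t \<in> {0..e/2}" for t
  proof -
    have "dist (\<Phi> q) (y t) = \<bar>t\<bar>" unfolding y_def by (simp add: dist_norm norm_Pair)
    with that \<open>e > 0\<close> have "y t \<in> ball (\<Phi> q) e" by auto
    with eV show ?thesis by auto
  qed
  have gV: "g ` V = U'" and \<Phi>g: "\<And>z. z \<in> V \<Longrightarrow> \<Phi> (g z) = z" and g\<Phi>: "\<And>x. x \<in> U' \<Longrightarrow> g (\<Phi> x) = x"
    using hom unfolding homeomorphism_def by auto
  have gyO: "g (y t) \<in> \<Omega>" if "t \<in> {0..e/2}" for t
    using yV[OF that] gV \<open>U' \<subseteq> \<Omega>\<close> by auto
  have dy: "(y has_derivative (\<lambda>h. (h, 0))) (at t)" for t
    unfolding y_def by (auto intro!: derivative_eq_intros)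
  have dw: "((\<lambda>t. u (g (y t))) has_derivative (\<lambda>h. 0)) (at t within {0..e/2})" if t: "t \<in> {0..e/2}" for t
  proof -
    let ?p = "g (y t)"
    obtain D where dD: "(u has_derivative D) (at ?p)" and DB: "\<And>v. B ?p v = 0 \<Longrightarrow> D v = 0"
      using H gyO[OF t] by blast
    have "((u \<circ> (g \<circ> y)) has_derivative (D \<circ> (g' (y t) \<circ> (\<lambda>h. (h, 0))))) (at t)"
      using dD by (intro diff_chain_at dy derg yV t) (simp add: o_def)
    moreover have "(D \<circ> (g' (y t) \<circ> (\<lambda>h. (h, 0)))) = (\<lambda>h. 0)"
    proof
      fix h :: real
      define v where "v = g' (y t) (h, 0)"
      have "blinfun_apply (\<Phi>' ?p) v = (h, 0)"
        unfolding v_def g'[OF yV[OF t]] using bij[OF yV[OF t]] by (meson bij_inv_eq_iff)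
      then have "B ?p v = 0" by (simp add: \<Phi>'_apply)
      then show "(D \<circ> (g' (y t) \<circ> (\<lambda>h. (h, 0)))) h = 0" using DB by (simp add: v_def)
    qed
    ultimately have "((\<lambda>t. u (g (y t))) has_derivative (\<lambda>h. 0)) (at t)" by (simp add: o_def)
    then show ?thesis by (rule has_derivative_at_withinI)
  qed
  have "u (g (y 0)) = u (g (y (e/2)))"
    by (rule has_derivative_zero_unique[OF convex_real_interval(5) dw]) (use \<open>e > 0\<close> in auto)
  moreover have "g (y 0) = q" unfolding y_def using g\<Phi>[OF \<open>q \<in> U'\<close>] by (simp add: zero_prod_def[symmetric])
  moreover have "\<alpha> (g (y (e/2))) = \<alpha> q + e/2"
  proof -
    have "\<Phi> (g (y (e/2))) = y (e/2)" using \<Phi>g yV \<open>e > 0\<close> by auto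
    then show ?thesis unfolding y_def \<Phi>_def by (simp add: prod_eq_iff)
  qed
  ultimately show ?thesis using gyO[of "e/2"] \<open>e > 0\<close> by (intro bexI[of _ "g (y (e/2))"]) auto
qed


lemma core:
  fixes \<Omega> :: "(real \<times> real) set" and \<alpha> \<beta> u :: "real \<times> real \<Rightarrow> real"
    and A B :: "real \<times> real \<Rightarrow> (real \<times> real) \<Rightarrow>\<^sub>L real"
  assumes ne: "\<Omega> \<noteq> {}" and bd: "bounded \<Omega>" and op: "open \<Omega>"
    and dA: "\<forall>p\<in>\<Omega>. (\<alpha> has_derivative blinfun_apply (A p)) (at p)" and cA: "continuous_on \<Omega> A"
    and dB: "\<forall>p\<in>\<Omega>. (\<beta> has_derivative blinfun_apply (B p)) (at p)" and cB: "continuous_on \<Omega> B"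
    and jac: "\<forall>p\<in>\<Omega>. A p (1,0) * B p (0,1) - A p (0,1) * B p (1,0) \<noteq> 0"
    and H: "\<forall>p\<in>\<Omega>. \<exists>D. (u has_derivative D) (at p) \<and> (\<forall>v. B p v = 0 \<longrightarrow> D v = 0)"
    and cu: "continuous_on (closure \<Omega>) u"
  shows "\<exists>z\<in>frontier \<Omega>. \<forall>p\<in>closure \<Omega>. u p \<le> u z"
proof (rule ccontr)
  assume nz: "\<not> ?thesis"
  let ?C = "closure \<Omega>"
  have cC: "compact ?C" using bd by (simp add: compact_closure)
  have neC: "?C \<noteq> {}" using ne by simp
  obtain m where m: "m \<in> ?C" "\<forall>p\<in>?C. u p \<le> u m"
    using continuous_attains_sup[OF cC neC cu] by blast
  have fr: "u z < u m" if "z \<in> frontier \<Omega>" for z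
  proof -
    have "\<not> (\<forall>p\<in>?C. u p \<le> u z)" using nz that by blast
    then obtain p where p: "p \<in> ?C" "\<not> u p \<le> u z" by blast
    have "u p \<le> u m" using m(2) p(1) by blast
    with p(2) show ?thesis by linarith
  qed
  define K where "K = {p \<in> ?C. u p = u m}"
  have "closed K" unfolding K_def
    by (rule continuous_closed_preimage_constant[OF cu closed_closure])
  moreover have "bounded K" using bd unfolding K_def
    by (rule bounded_subset[OF bounded_closure]) auto
  ultimately have cK: "compact K" by (simp add: compact_eq_bounded_closed)
  have KO: "K \<subseteq> \<Omega>"
  proof
    fix p assume "p \<in> K"
    then have "p \<in> ?C" "u p = u m" unfolding K_def by auto
    then have "p \<notin> frontier \<Omega>"
    proof -
      assume um: "u p = u m"
      show "p \<notin> frontier \<Omega>"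
      proof
        assume "p \<in> frontier \<Omega>"
        then have "u p < u m" by (rule fr)
        with um show False by simp
      qed
    qed
    with \<open>p \<in> ?C\<close> show "p \<in> \<Omega>" using op by (simp add: frontier_def interior_open)
  qed
  have neK: "K \<noteq> {}" using m(1) unfolding K_def by blast
  have "continuous_on \<Omega> \<alpha>"
  proof (rule continuous_at_imp_continuous_on, rule ballI)
    fix x assume "x \<in> \<Omega>"
    show "isCont \<alpha> x" by (rule has_derivative_continuous[OF dA[rule_format, OF \<open>x \<in> \<Omega>\<close>]])
  qed
  then have "continuous_on K \<alpha>" using KO continuous_on_subset by blast
  then obtain q where q: "q \<in> K" "\<forall>p\<in>K. \<alpha> p \<le> \<alpha> q"
    using continuous_attains_sup[OF cK neK] by blast
  obtain p where p: "p \<in> \<Omega>" "\<alpha> p > \<alpha> q" "u p = u q"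
    using local_step[OF op dA cA dB cB jac H, of q] q(1) KO by blast
  have "p \<in> K" using p q closure_subset unfolding K_def by auto
  then have "\<alpha> p \<le> \<alpha> q" using q(2) by blast
  with p(2) show False by linarith
qed

theorem theorem6:
  fixes \<Omega> :: "(real \<times> real) set"
    and \<alpha> \<beta> u :: "real \<times> real \<Rightarrow> real"
  assumes "\<Omega> \<noteq> {}" and "bounded \<Omega>" and "open \<Omega>"
    and "C1_on \<Omega> \<beta>"
    and "C1_on \<Omega> \<alpha>"
    and "\<forall>p\<in>\<Omega>. dx \<alpha> p * dy \<beta> p - dy \<alpha> p * dx \<beta> p \<noteq> 0"
    and "C1_on \<Omega> u" and "continuous_on (closure \<Omega>) u"
    and "\<forall>p\<in>\<Omega>. dy \<beta> p * dx u p - dx \<beta> p * dy u p = 0"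
  shows "(SUP p\<in>\<Omega>. u p) = (SUP p\<in>frontier \<Omega>. u p) \<and>
         (INF p\<in>\<Omega>. u p) = (INF p\<in>frontier \<Omega>. u p)"
proof -
  note ne = assms(1) and bd = assms(2) and op = assms(3)
  obtain B where dB: "\<forall>p\<in>\<Omega>. (\<beta> has_derivative blinfun_apply (B p)) (at p)" and cB: "continuous_on \<Omega> B"
    using assms(4) unfolding C1_on_def by blast
  obtain A where dA: "\<forall>p\<in>\<Omega>. (\<alpha> has_derivative blinfun_apply (A p)) (at p)" and cA: "continuous_on \<Omega> A"
    using assms(5) unfolding C1_on_def by blast
  obtain U where dU: "\<forall>p\<in>\<Omega>. (u has_derivative blinfun_apply (U p)) (at p)"
    using assms(7) unfolding C1_on_def by blast
  have fA: "frechet_derivative \<alpha> (at p) = A p" if "p \<in> \<Omega>" for p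
    using dA that frechet_derivative_at by metis
  have fB: "frechet_derivative \<beta> (at p) = B p" if "p \<in> \<Omega>" for p
    using dB that frechet_derivative_at by metis
  have fU: "frechet_derivative u (at p) = U p" if "p \<in> \<Omega>" for p
    using dU that frechet_derivative_at by metis
  have jac: "\<forall>p\<in>\<Omega>. A p (1,0) * B p (0,1) - A p (0,1) * B p (1,0) \<noteq> 0"
    using assms(6) fA fB unfolding dx_def dy_def by auto
  have key: "U p v = 0" if p: "p \<in> \<Omega>" and Bv: "B p v = 0" for p v
  proof -
    define bx where "bx = B p (1,0)"
    define by' where "by' = B p (0,1)"
    define ux where "ux = U p (1,0)"
    define uy where "uy = U p (0,1)"
    have pde: "by' * ux - bx * uy = 0"
      using assms(9) p fB fU unfolding dx_def dy_def bx_def by'_def ux_def uy_def by auto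
    have nz: "bx \<noteq> 0 \<or> by' \<noteq> 0" using jac p unfolding bx_def by'_def by auto
    have e1: "fst v * bx + snd v * by' = 0" using Bv lin2[of "B p" v] unfolding bx_def by'_def by simp
    have Uv: "U p v = fst v * ux + snd v * uy" unfolding ux_def uy_def by (rule lin2)
    have "bx * (fst v * ux + snd v * uy) = ux * (fst v * bx + snd v * by') - snd v * (by' * ux - bx * uy)"
      by (simp add: algebra_simps)
    then have h1: "bx * U p v = 0" using e1 pde Uv by simp
    have "by' * (fst v * ux + snd v * uy) = uy * (fst v * bx + snd v * by') + fst v * (by' * ux - bx * uy)"
      by (simp add: algebra_simps)
    then have h2: "by' * U p v = 0" using e1 pde Uv by simp
    show ?thesis using h1 h2 nz by auto
  qed
  have H1: "\<forall>p\<in>\<Omega>. \<exists>D. (u has_derivative D) (at p) \<and> (\<forall>v. B p v = 0 \<longrightarrow> D v = 0)"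
    using dU key by blast
  have H2: "\<forall>p\<in>\<Omega>. \<exists>D. ((\<lambda>p. - u p) has_derivative D) (at p) \<and> (\<forall>v. B p v = 0 \<longrightarrow> D v = 0)"
  proof
    fix p assume p: "p \<in> \<Omega>"
    show "\<exists>D. ((\<lambda>p. - u p) has_derivative D) (at p) \<and> (\<forall>v. B p v = 0 \<longrightarrow> D v = 0)"
      using has_derivative_minus[OF dU[rule_format, OF p]] key[OF p] by auto
  qed
  have cu: "continuous_on (closure \<Omega>) u" by fact
  have cu2: "continuous_on (closure \<Omega>) (\<lambda>p. - u p)" using cu by (intro continuous_intros)
  obtain z1 where z1: "z1 \<in> frontier \<Omega>" "\<forall>p\<in>closure \<Omega>. u p \<le> u z1"
    using core[OF ne bd op dA cA dB cB jac H1 cu] by blast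
  obtain z2 where z2: "z2 \<in> frontier \<Omega>" "\<forall>p\<in>closure \<Omega>. - u p \<le> - u z2"
    using core[OF ne bd op dA cA dB cB jac H2 cu2] by blast
  have frC: "frontier \<Omega> \<subseteq> closure \<Omega>" by (simp add: frontier_def)
  have OC: "\<Omega> \<subseteq> closure \<Omega>" by (rule closure_subset)
  have bda: "bdd_above (u ` \<Omega>)" using z1 OC by (intro bdd_aboveI2[where M="u z1"]) auto
  have bdb: "bdd_below (u ` \<Omega>)" using z2 OC by (intro bdd_belowI2[where m="u z2"]) auto
  have s1: "(SUP p\<in>frontier \<Omega>. u p) = u z1"
    using z1 frC by (intro cSup_eq_maximum) auto
  have i1: "(INF p\<in>frontier \<Omega>. u p) = u z2"
    using z2 frC by (intro cInf_eq_minimum) auto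
  have "u ` closure \<Omega> \<subseteq> {..(SUP p\<in>\<Omega>. u p)}"
    by (rule image_closure_subset[OF cu]) (auto intro: cSUP_upper bda)
  then have "u z1 \<le> (SUP p\<in>\<Omega>. u p)" using z1 frC by auto
  moreover have "(SUP p\<in>\<Omega>. u p) \<le> u z1" using z1 OC ne by (intro cSUP_least) auto
  ultimately have s2: "(SUP p\<in>\<Omega>. u p) = u z1" by simp
  have "u ` closure \<Omega> \<subseteq> {(INF p\<in>\<Omega>. u p)..}"
    by (rule image_closure_subset[OF cu]) (auto intro: cINF_lower bdb)
  then have "(INF p\<in>\<Omega>. u p) \<le> u z2" using z2 frC by auto
  moreover have "u z2 \<le> (INF p\<in>\<Omega>. u p)" using z2 OC ne by (intro cINF_greatest) auto
  ultimately have i2: "(INF p\<in>\<Omega>. u p) = u z2" by simp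
  show ?thesis using s1 s2 i1 i2 by simp
qed

end
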